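(* Let $M$ be a semifinite von Neumann algebra with a normal faithful semifinite trace $\tau$. Then $\mathcal{U}(M)_2=\{u\in\mathcal{U}(M): 1-u\in L^2(M,\tau)\}$, with the topology given by the metric $d(u,v)=\|u-v\|_2$, is a topological group.
   Context: $\mathcal{U}(M)$ is the unitary group of $M$. $L^2(M,\tau)$ is the Hilbert space completion of $\mathfrak{n}_\tau=\{x\in M:\tau(x^*x)<\infty\}$ for the inner product $\langle x,y\rangle=\tau(x^*y)$, with norm $\|x\|_2=\tau(x^*x)^{1/2}$. *)

theory Defs
  imports "HOL-Analysis.Analysis" "HOL-Library.Extended_Nonnegative_Real"
begin

text \<open>A complex Hilbert space is modelled as a real Hilbert space 'h (class real_inner +
complete_space) together with a complex structure J (multiplication by the imaginary unit):
a real-linear isometry with J o J = -1.  The complex inner product is then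
<x,y> = x \<bullet> y + i (x \<bullet> J y), and complex-linear bounded operators are exactly the
bounded real-linear operators commuting with J.\<close>

definition complex_structure :: "('h::real_inner \<Rightarrow>\<^sub>L 'h) \<Rightarrow> bool" where
  "complex_structure J \<longleftrightarrow> J o\<^sub>L J = - id_blinfun \<and> (\<forall>x y. J x \<bullet> J y = x \<bullet> y)"

definition cbounded :: "('h::real_normed_vector \<Rightarrow>\<^sub>L 'h) \<Rightarrow> ('h \<Rightarrow>\<^sub>L 'h) set" where
  "cbounded J = {x. x o\<^sub>L J = J o\<^sub>L x}"

text \<open>Hilbert space adjoint of a bounded operator (for complex-linear operators the real
and the complex adjoints coincide).\<close>
definition adj :: "('h::real_inner \<Rightarrow>\<^sub>L 'h) \<Rightarrow> ('h \<Rightarrow>\<^sub>L 'h)" where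
  "adj x = Blinfun (adjoint (blinfun_apply x))"

definition commutant :: "('h::real_normed_vector \<Rightarrow>\<^sub>L 'h) \<Rightarrow> ('h \<Rightarrow>\<^sub>L 'h) set \<Rightarrow> ('h \<Rightarrow>\<^sub>L 'h) set" where
  "commutant J S = {y \<in> cbounded J. \<forall>x\<in>S. x o\<^sub>L y = y o\<^sub>L x}"

definition von_neumann_algebra :: "('h::{real_inner,complete_space} \<Rightarrow>\<^sub>L 'h) \<Rightarrow> ('h \<Rightarrow>\<^sub>L 'h) set \<Rightarrow> bool" where
  "von_neumann_algebra J M \<longleftrightarrow> complex_structure J \<and> M \<subseteq> cbounded J \<and>
     commutant J (commutant J M) = M \<and> (\<forall>x\<in>M. adj x \<in> M)"

definition pos_part :: "('h::real_inner \<Rightarrow>\<^sub>L 'h) set \<Rightarrow> ('h \<Rightarrow>\<^sub>L 'h) set" where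
  "pos_part M = {x. \<exists>y\<in>M. x = adj y o\<^sub>L y}"

definition op_le :: "('h::real_inner \<Rightarrow>\<^sub>L 'h) set \<Rightarrow> ('h \<Rightarrow>\<^sub>L 'h) \<Rightarrow> ('h \<Rightarrow>\<^sub>L 'h) \<Rightarrow> bool" where
  "op_le M x y \<longleftrightarrow> y - x \<in> pos_part M"

definition nfs_trace :: "('h::real_inner \<Rightarrow>\<^sub>L 'h) set \<Rightarrow> (('h \<Rightarrow>\<^sub>L 'h) \<Rightarrow> ennreal) \<Rightarrow> bool" where
  "nfs_trace M \<tau> \<longleftrightarrow>
     \<comment> \<open>additive and positively homogeneous on M_+\<close>
     (\<forall>x\<in>pos_part M. \<forall>y\<in>pos_part M. \<tau> (x + y) = \<tau> x + \<tau> y) \<and>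
     (\<forall>x\<in>pos_part M. \<forall>c::real. c \<ge> 0 \<longrightarrow> \<tau> (c *\<^sub>R x) = ennreal c * \<tau> x) \<and>
     \<comment> \<open>trace property\<close>
     (\<forall>x\<in>M. \<tau> (adj x o\<^sub>L x) = \<tau> (x o\<^sub>L adj x)) \<and>
     \<comment> \<open>faithful\<close>
     (\<forall>x\<in>pos_part M. \<tau> x = 0 \<longrightarrow> x = 0) \<and>
     \<comment> \<open>normal: tau(sup x_i) = sup tau(x_i) for every bounded increasing net in M_+
        (represented by its upward directed range F with least upper bound x)\<close>
     (\<forall>F x. F \<subseteq> pos_part M \<longrightarrow> F \<noteq> {} \<longrightarrow>
        (\<forall>a\<in>F. \<forall>b\<in>F. \<exists>c\<in>F. op_le M a c \<and> op_le M b c) \<longrightarrow>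
        x \<in> pos_part M \<longrightarrow> (\<forall>a\<in>F. op_le M a x) \<longrightarrow>
        (\<forall>z\<in>pos_part M. (\<forall>a\<in>F. op_le M a z) \<longrightarrow> op_le M x z) \<longrightarrow>
        \<tau> x = (SUP a\<in>F. \<tau> a)) \<and>
     \<comment> \<open>semifinite\<close>
     (\<forall>x\<in>pos_part M. x \<noteq> 0 \<longrightarrow> (\<exists>y\<in>pos_part M. y \<noteq> 0 \<and> op_le M y x \<and> \<tau> y < \<infinity>))"

definition unitary_group :: "('h::real_inner \<Rightarrow>\<^sub>L 'h) set \<Rightarrow> ('h \<Rightarrow>\<^sub>L 'h) set" where
  "unitary_group M = {u\<in>M. adj u o\<^sub>L u = id_blinfun \<and> u o\<^sub>L adj u = id_blinfun}"

text \<open>n_tau = {x \<in> M. tau(x* x) < \<infinity>}: the elements of M that lie in L^2(M,tau).\<close>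
definition L2_part :: "('h::real_inner \<Rightarrow>\<^sub>L 'h) set \<Rightarrow> (('h \<Rightarrow>\<^sub>L 'h) \<Rightarrow> ennreal) \<Rightarrow> ('h \<Rightarrow>\<^sub>L 'h) set" where
  "L2_part M \<tau> = {x\<in>M. \<tau> (adj x o\<^sub>L x) < \<infinity>}"

definition norm2 :: "(('h::real_inner \<Rightarrow>\<^sub>L 'h) \<Rightarrow> ennreal) \<Rightarrow> ('h \<Rightarrow>\<^sub>L 'h) \<Rightarrow> real" where
  "norm2 \<tau> x = sqrt (enn2real (\<tau> (adj x o\<^sub>L x)))"

definition unitary_group_2 :: "('h::real_inner \<Rightarrow>\<^sub>L 'h) set \<Rightarrow> (('h \<Rightarrow>\<^sub>L 'h) \<Rightarrow> ennreal) \<Rightarrow> ('h \<Rightarrow>\<^sub>L 'h) set" where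
  "unitary_group_2 M \<tau> = {u\<in>unitary_group M. id_blinfun - u \<in> L2_part M \<tau>}"

end

theory Submission
  imports Defs
begin


lemma riesz_aux:
  fixes \<phi> :: "'h::{real_inner,complete_space} \<Rightarrow> real"
  assumes bl: "bounded_linear \<phi>" and a: "\<phi> a = 1"
  shows "\<exists>w. \<forall>x. \<phi> x = x \<bullet> w"
proof -
  interpret bounded_linear \<phi> by fact
  define C where "C = {x. \<phi> x = 1}"
  define d where "d = Inf (norm ` C)"
  have Cne: "norm ` C \<noteq> {}" using a by (auto simp: C_def)
  have bdd: "bdd_below (norm ` C)" by (rule bdd_belowI[of _ 0]) auto
  have dle: "d \<le> norm y" if "y \<in> C" for y
    unfolding d_def using bdd that by (simp add: cInf_lower)
  have d0: "0 \<le> d" unfolding d_def using Cne by (intro cInf_greatest) auto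
  have "\<exists>x\<in>C. norm x < d + 1 / (real n + 1)" for n
  proof -
    have "Inf (norm ` C) < d + 1 / (real n + 1)" unfolding d_def by simp
    from cInf_lessD[OF Cne this] show ?thesis by auto
  qed
  then obtain X where XC: "\<And>n. X n \<in> C" and Xn: "\<And>n. norm (X n) < d + 1 / (real n + 1)"
    by metis
  have para: "norm (x - y)^2 \<le> 2 * norm x ^2 + 2 * norm y ^2 - 4 * d^2" if "x \<in> C" "y \<in> C" for x y
  proof -
    have "(1/2) *\<^sub>R (x + y) \<in> C" using that by (simp add: C_def add scale)
    hence "d \<le> norm ((1/2) *\<^sub>R (x + y))" by (rule dle)
    hence "2 * d \<le> norm (x + y)" by simp
    hence "(2*d)^2 \<le> norm (x+y)^2" using d0 by (intro power_mono) auto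
    moreover have "norm (x - y)^2 + norm (x+y)^2 = 2 * norm x ^2 + 2 * norm y ^2"
      by (simp add: power2_norm_eq_inner inner_add inner_diff inner_commute)
    ultimately show ?thesis by (simp add: power_mult_distrib)
  qed
  have "Cauchy X"
  proof (rule CauchyI)
    fix e :: real assume e: "e > 0"
    define \<delta> where "\<delta> = min 1 (e^2 / (8*d+5))"
    have \<delta>: "\<delta> > 0" "\<delta> \<le> 1" "(8*d+4) * \<delta> < e^2"
    proof -
      show "\<delta> > 0" using e d0 by (simp add: \<delta>_def)
      show "\<delta> \<le> 1" by (simp add: \<delta>_def)
      have "(8*d+4) * \<delta> \<le> (8*d+4) * (e^2 / (8*d+5))" using d0 by (intro mult_left_mono) (auto simp: \<delta>_def)
      also have "\<dots> < e^2" using d0 e by (simp add: field_simps)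
      finally show "(8*d+4) * \<delta> < e^2" .
    qed
    obtain N :: nat where N: "1 / (real N + 1) < \<delta>"
      using \<delta>(1) by (metis add.commute nat_approx_posE of_nat_Suc)
    show "\<exists>N. \<forall>m\<ge>N. \<forall>n\<ge>N. norm (X m - X n) < e"
    proof (intro exI allI impI)
      fix m n assume mn: "N \<le> m" "N \<le> n"
      have em: "1 / (real m + 1) \<le> 1 / (real N + 1)" using mn by (simp add: frac_le)
      have en: "1 / (real n + 1) \<le> 1 / (real N + 1)" using mn by (simp add: frac_le)
      define a where "a = 1 / (real m + 1)"
      define b where "b = 1 / (real n + 1)"
      have ab: "0 \<le> a" "a \<le> \<delta>" "0 \<le> b" "b \<le> \<delta>" using em en N by (auto simp: a_def b_def)
      have "norm (X m)^2 \<le> (d + a)^2" using Xn[of m] by (intro power_mono) (auto simp: a_def)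
      moreover have "norm (X n)^2 \<le> (d + b)^2" using Xn[of n] by (intro power_mono) (auto simp: b_def)
      ultimately have "norm (X m - X n)^2 \<le> 2*(d+a)^2 + 2*(d+b)^2 - 4*d^2"
        using para[OF XC XC, of m n] by linarith
      also have "\<dots> = 4*d*(a+b) + 2*a^2 + 2*b^2" by (simp add: power2_eq_square algebra_simps)
      also have "\<dots> \<le> 4*d*(2*\<delta>) + 2*\<delta> + 2*\<delta>"
      proof -
        have "a*a \<le> 1*a" using ab \<delta> by (intro mult_right_mono) auto
        hence "a^2 \<le> \<delta>" using ab by (simp add: power2_eq_square)
        moreover have "b*b \<le> 1*b" using ab \<delta> by (intro mult_right_mono) auto
        hence "b^2 \<le> \<delta>" using ab by (simp add: power2_eq_square)
        moreover have "4*d*(a+b) \<le> 4*d*(2*\<delta>)" using ab d0 by (intro mult_left_mono) auto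
        ultimately show ?thesis by linarith
      qed
      also have "\<dots> = (8*d+4) * \<delta>" by (simp add: algebra_simps)
      also have "\<dots> < e^2" by fact
      finally have "norm (X m - X n)^2 < e^2" .
      thus "norm (X m - X n) < e" using e power2_less_imp_less by fastforce
    qed
  qed
  then obtain z where Xz: "X \<longlonglongrightarrow> z" using Cauchy_convergent_iff convergent_def by blast
  have "(\<lambda>n. \<phi> (X n)) \<longlonglongrightarrow> \<phi> z" by (intro tendsto Xz)
  moreover have "(\<lambda>n. \<phi> (X n)) = (\<lambda>n. 1)" using XC by (auto simp: C_def)
  ultimately have \<phi>z: "\<phi> z = 1" using LIMSEQ_unique by (metis tendsto_const)
  have "(\<lambda>n. 1 / (real n + 1)) \<longlonglongrightarrow> 0"
    using LIMSEQ_inverse_real_of_nat by (simp add: inverse_eq_divide add.commute)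
  hence "(\<lambda>n. d + 1 / (real n + 1)) \<longlonglongrightarrow> d + 0"
    by (intro tendsto_add tendsto_const)
  hence "(\<lambda>n. d + 1 / (real n + 1)) \<longlonglongrightarrow> d" by simp
  hence zd: "norm z \<le> d"
    using tendsto_norm[OF Xz] Xn by (intro LIMSEQ_le[of "\<lambda>n. norm (X n)" _ "\<lambda>n. d + 1 / (real n + 1)"]) (auto intro: less_imp_le)
  have orth: "z \<bullet> k = 0" if k: "\<phi> k = 0" for k
  proof -
    define c where "c = z \<bullet> k"
    define K where "K = k \<bullet> k"
    have K0: "K \<ge> 0" by (simp add: K_def)
    define t where "t = - c / (K + 1)"
    have "z + t *\<^sub>R k \<in> C" using \<phi>z k by (simp add: C_def add scale)
    hence "norm z \<le> norm (z + t *\<^sub>R k)" using zd dle by fastforce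
    hence "norm z ^2 \<le> norm (z + t *\<^sub>R k)^2" by (intro power_mono) auto
    moreover have "norm (z + t *\<^sub>R k)^2 = norm z^2 + 2 * t * c + t^2 * K"
      unfolding power2_norm_eq_inner c_def K_def
      by (simp add: inner_add_left inner_add_right inner_commute power2_eq_square algebra_simps)
    ultimately have "0 \<le> 2 * t * c + t^2 * K" by linarith
    hence "0 \<le> (2 * t * c + t^2 * K) * (K+1)^2" using K0 by simp
    also have "(2 * t * c + t^2 * K) * (K+1)^2 = 2*c*(t*(K+1))*(K+1) + K*(t*(K+1))^2"
      by (simp add: power2_eq_square algebra_simps)
    also have "t * (K+1) = - c" using K0 by (simp add: t_def)
    also have "2*c*(-c)*(K+1) + K*(-c)^2 = - (c^2 * (K + 2))"
      by (simp add: power2_eq_square algebra_simps)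
    finally have "c^2 * (K+2) \<le> 0" by simp
    hence "c^2 \<le> 0" using K0 by (simp add: mult_le_0_iff)
    thus ?thesis unfolding c_def by simp
  qed
  have z0: "z \<bullet> z \<noteq> 0" using \<phi>z zero by auto
  show ?thesis
  proof (intro exI allI)
    fix x
    have "\<phi> (x - \<phi> x *\<^sub>R z) = 0" using \<phi>z by (simp add: diff scale)
    hence "z \<bullet> (x - \<phi> x *\<^sub>R z) = 0" by (rule orth)
    hence "z \<bullet> x = \<phi> x * (z \<bullet> z)" by (simp add: inner_diff_right)
    thus "\<phi> x = x \<bullet> ((1 / (z \<bullet> z)) *\<^sub>R z)" using z0 by (simp add: inner_commute)
  qed
qed

lemma riesz:
  fixes \<phi> :: "'h::{real_inner,complete_space} \<Rightarrow> real"
  assumes bl: "bounded_linear \<phi>"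
  shows "\<exists>w. \<forall>x. \<phi> x = x \<bullet> w"
proof (cases "\<forall>x. \<phi> x = 0")
  case True thus ?thesis by (intro exI[of _ 0]) auto
next
  case False
  then obtain a where a: "\<phi> a \<noteq> 0" by auto
  interpret bounded_linear \<phi> by fact
  have "\<phi> ((1 / \<phi> a) *\<^sub>R a) = 1" using a by (simp add: scale)
  from riesz_aux[OF bl this] show ?thesis .
qed



lemma adjoint_exists:
  fixes f :: "'h::{real_inner,complete_space} \<Rightarrow>\<^sub>L 'h"
  shows "\<exists>g. \<forall>x y. f x \<bullet> y = x \<bullet> g y"
proof -
  have "\<forall>y. \<exists>w. \<forall>x. f x \<bullet> y = x \<bullet> w"
  proof
    fix y
    have "bounded_linear (\<lambda>x. f x \<bullet> y)"
      by (intro bounded_linear_compose[OF bounded_linear_inner_left blinfun.bounded_linear_right])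
    from riesz[OF this] show "\<exists>w. \<forall>x. f x \<bullet> y = x \<bullet> w" .
  qed
  thus ?thesis by metis
qed

lemma inner_eq_all: "(\<And>x::'a::real_inner. x \<bullet> a = x \<bullet> b) \<Longrightarrow> a = b"
  by (metis vector_eq_ldot)

lemma adj_works:
  fixes f :: "'h::{real_inner,complete_space} \<Rightarrow>\<^sub>L 'h"
  shows "f x \<bullet> y = x \<bullet> adj f y"
proof -
  obtain g where g: "\<And>x y. f x \<bullet> y = x \<bullet> g y" using adjoint_exists[of f] by blast
  have ag: "adjoint (blinfun_apply f) = g" by (rule adjoint_unique) (simp add: g)
  have lin: "linear g"
  proof
    fix a b show "g (a + b) = g a + g b"
      by (rule inner_eq_all) (simp add: inner_add_right g[symmetric] inner_add_right)
  next
    fix r a show "g (r *\<^sub>R a) = r *\<^sub>R g a"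
      by (rule inner_eq_all) (simp add: g[symmetric])
  qed
  have bnd: "norm (g y) \<le> norm f * norm y" for y
  proof (cases "g y = 0")
    case True thus ?thesis by simp
  next
    case False
    have "norm (g y)^2 = f (g y) \<bullet> y" by (simp add: g power2_norm_eq_inner)
    also have "\<dots> \<le> norm (f (g y)) * norm y" by (rule norm_cauchy_schwarz)
    also have "\<dots> \<le> norm f * norm (g y) * norm y"
      by (intro mult_right_mono norm_blinfun) auto
    finally have "norm (g y) * norm (g y) \<le> (norm f * norm y) * norm (g y)"
      by (simp add: power2_eq_square algebra_simps)
    thus ?thesis using False by simp
  qed
  have "bounded_linear g"
    using lin bnd by (intro bounded_linear_intro[of g "norm f"]) (auto simp: linear_add linear_scale mult.commute)
  hence "blinfun_apply (adj f) = g" unfolding adj_def ag by (rule bounded_linear_Blinfun_apply)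
  thus ?thesis by (simp add: g)
qed

lemma adj_works2:
  fixes f :: "'h::{real_inner,complete_space} \<Rightarrow>\<^sub>L 'h"
  shows "adj f x \<bullet> y = x \<bullet> f y"
  by (metis adj_works inner_commute)

lemma adj_unique:
  fixes f g :: "'h::{real_inner,complete_space} \<Rightarrow>\<^sub>L 'h"
  assumes "\<And>x y. f x \<bullet> y = x \<bullet> g y"
  shows "adj f = g"
proof (rule blinfun_eqI)
  fix y show "adj f y = g y"
    by (rule inner_eq_all) (simp add: adj_works[symmetric] assms)
qed

lemma adj_add: "adj (f + g) = adj f + adj (g :: 'h::{real_inner,complete_space} \<Rightarrow>\<^sub>L 'h)"
  by (rule adj_unique) (simp add: plus_blinfun.rep_eq inner_add adj_works)
lemma adj_diff: "adj (f - g) = adj f - adj (g :: 'h::{real_inner,complete_space} \<Rightarrow>\<^sub>L 'h)"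
  by (rule adj_unique) (simp add: minus_blinfun.rep_eq inner_diff adj_works)
lemma adj_minus: "adj (- f) = - adj (f :: 'h::{real_inner,complete_space} \<Rightarrow>\<^sub>L 'h)"
  by (rule adj_unique) (simp add: uminus_blinfun.rep_eq adj_works)
lemma adj_scaleR: "adj (c *\<^sub>R f) = c *\<^sub>R adj (f :: 'h::{real_inner,complete_space} \<Rightarrow>\<^sub>L 'h)"
  by (rule adj_unique) (simp add: scaleR_blinfun.rep_eq adj_works)
lemma adj_comp: "adj (f o\<^sub>L g) = adj g o\<^sub>L adj (f :: 'h::{real_inner,complete_space} \<Rightarrow>\<^sub>L 'h)"
  by (rule adj_unique) (simp add: adj_works)
lemma adj_id: "adj (id_blinfun :: 'h::{real_inner,complete_space} \<Rightarrow>\<^sub>L 'h) = id_blinfun"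
  by (rule adj_unique) simp
lemma adj_adj: "adj (adj f) = (f :: 'h::{real_inner,complete_space} \<Rightarrow>\<^sub>L 'h)"
  by (rule adj_unique) (simp add: adj_works2)

lemma adj_self_zero:
  fixes a :: "'h::{real_inner,complete_space} \<Rightarrow>\<^sub>L 'h"
  assumes "adj a o\<^sub>L a = 0" shows "a = 0"
proof (rule blinfun_eqI)
  fix x
  have "a x \<bullet> a x = x \<bullet> (adj a o\<^sub>L a) x" by (simp add: adj_works)
  also have "\<dots> = 0" using assms by simp
  finally show "blinfun_apply a x = blinfun_apply 0 x" by simp
qed



lemma comp_assoc_L: "(f o\<^sub>L g) o\<^sub>L h = f o\<^sub>L (g o\<^sub>L h)"
  by (rule blinfun_eqI) simp

lemma compeq: "(f o\<^sub>L g = h o\<^sub>L k) \<longleftrightarrow> (\<forall>a. f (g a) = h (k a))"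
  by (metis blinfun_apply_blinfun_compose blinfun_eqI)

lemma comm_closed:
  assumes "x \<in> commutant J S" "y \<in> commutant J S"
  shows "x + y \<in> commutant J S" "x - y \<in> commutant J S" "x o\<^sub>L y \<in> commutant J S"
    "c *\<^sub>R x \<in> commutant J S" "- x \<in> commutant J S"
  using assms unfolding commutant_def cbounded_def compeq
  by (auto simp: blinfun.bilinear_simps)

lemma comm_id: "id_blinfun \<in> commutant J S"
  unfolding commutant_def cbounded_def compeq by auto

context
  fixes J :: "'h::{real_inner,complete_space} \<Rightarrow>\<^sub>L 'h"
    and M :: "('h \<Rightarrow>\<^sub>L 'h) set"
    and \<tau> :: "('h \<Rightarrow>\<^sub>L 'h) \<Rightarrow> ennreal"
  assumes vN: "von_neumann_algebra J M"
    and tr: "nfs_trace M \<tau>"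
begin

lemma Meq: "M = commutant J (commutant J M)" using vN by (simp add: von_neumann_algebra_def)

lemma M_closed:
  assumes "x \<in> M" "y \<in> M"
  shows "x + y \<in> M" "x - y \<in> M" "x o\<^sub>L y \<in> M" "c *\<^sub>R x \<in> M" "- x \<in> M" "adj x \<in> M"
  using comm_closed[of x J "commutant J M" y] assms Meq vN
  by (auto simp: von_neumann_algebra_def)

lemma M_id: "id_blinfun \<in> M" using comm_id Meq by metis
lemma M_zero: "0 \<in> M" using M_closed(2)[OF M_id M_id] by simp

lemma pos_in: "x \<in> M \<Longrightarrow> adj x o\<^sub>L x \<in> pos_part M"
  unfolding pos_part_def by auto

lemma pos_scale: assumes "c \<ge> 0" "p \<in> pos_part M" shows "c *\<^sub>R p \<in> pos_part M"
proof -
  obtain y where y: "y \<in> M" "p = adj y o\<^sub>L y" using assms unfolding pos_part_def by auto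
  have "c *\<^sub>R p = adj (sqrt c *\<^sub>R y) o\<^sub>L (sqrt c *\<^sub>R y)"
    using assms(1) by (intro blinfun_eqI) (simp add: y adj_scaleR blinfun.bilinear_simps)
  thus ?thesis using M_closed(4)[OF y(1) y(1)] unfolding pos_part_def by blast
qed

lemma tau_add: "x \<in> pos_part M \<Longrightarrow> y \<in> pos_part M \<Longrightarrow> \<tau> (x + y) = \<tau> x + \<tau> y"
  using tr by (simp add: nfs_trace_def)
lemma tau_scale: "x \<in> pos_part M \<Longrightarrow> c \<ge> 0 \<Longrightarrow> \<tau> (c *\<^sub>R x) = ennreal c * \<tau> x"
  using tr by (simp add: nfs_trace_def)
lemma tau_trace: "x \<in> M \<Longrightarrow> \<tau> (adj x o\<^sub>L x) = \<tau> (x o\<^sub>L adj x)"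
  using tr by (simp add: nfs_trace_def)
lemma tau_faithful: "x \<in> pos_part M \<Longrightarrow> \<tau> x = 0 \<Longrightarrow> x = 0"
  using tr by (simp add: nfs_trace_def)

lemma tau_zero: "\<tau> 0 = 0"
proof -
  have "0 \<in> pos_part M" using pos_in[OF M_zero] by (simp add: adj_minus)
  from tau_scale[OF this, of 0] show ?thesis by simp
qed

definition N where "N a = \<tau> (adj a o\<^sub>L a)"

lemma N_zero_iff: "a \<in> M \<Longrightarrow> N a = 0 \<longleftrightarrow> a = 0"
  using tau_faithful[OF pos_in] adj_self_zero tau_zero unfolding N_def
  by (metis adj_minus blinfun_compose_zero(2) minus_zero)

lemma N_minus: "N (- a) = N a"
  unfolding N_def by (rule arg_cong[where f=\<tau>]) (rule blinfun_eqI, simp add: adj_minus blinfun.bilinear_simps)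

lemma N_left: assumes "adj u o\<^sub>L u = id_blinfun" shows "N (u o\<^sub>L x) = N x"
proof -
  have "\<And>a. adj u (u a) = a" using assms by (metis blinfun_apply_blinfun_compose blinfun_apply_id_blinfun)
  hence "adj (u o\<^sub>L x) o\<^sub>L (u o\<^sub>L x) = adj x o\<^sub>L x" by (intro blinfun_eqI) (simp add: adj_comp)
  thus ?thesis by (simp add: N_def)
qed

lemma N_adj: "x \<in> M \<Longrightarrow> N (adj x) = N x"
  unfolding N_def by (simp add: adj_adj tau_trace)

lemma N_right: assumes "v o\<^sub>L adj v = id_blinfun" "x \<in> M" "v \<in> M" shows "N (x o\<^sub>L v) = N x"
proof -
  have "\<And>a. v (adj v a) = a" using assms by (metis blinfun_apply_blinfun_compose blinfun_apply_id_blinfun)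
  hence eq: "(x o\<^sub>L v) o\<^sub>L adj (x o\<^sub>L v) = x o\<^sub>L adj x" by (intro blinfun_eqI) (simp add: adj_comp)
  have "N (x o\<^sub>L v) = \<tau> ((x o\<^sub>L v) o\<^sub>L adj (x o\<^sub>L v))"
    unfolding N_def using M_closed(3)[OF assms(2,3)] by (rule tau_trace)
  also have "\<dots> = N x" unfolding eq N_def using tau_trace[OF assms(2)] by simp
  finally show ?thesis .
qed


lemma vec_id: fixes p q r w :: "'a::real_vector" assumes "s * t = 1"
  shows "(p + q + r + w) + (s *\<^sub>R (s *\<^sub>R p - t *\<^sub>R q) - t *\<^sub>R (s *\<^sub>R r - t *\<^sub>R w)) = (1+s^2) *\<^sub>R p + (1+t^2) *\<^sub>R w"
proof -
  have "t * s = 1" using assms by (simp add: mult.commute)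
  thus ?thesis using assms by (simp add: algebra_simps power2_eq_square)
qed

lemma N_key:
  assumes a: "a \<in> M" and b: "b \<in> M" and s: "s > 0"
  shows "N (a + b) \<le> ennreal (1 + s^2) * N a + ennreal (1 + (1/s)^2) * N b"
proof -
  define t where "t = 1 / s"
  have st: "s * t = 1" using s by (simp add: t_def)
  have ts: "t * s = 1" using s by (simp add: t_def)
  define c where "c = s *\<^sub>R a - t *\<^sub>R b"
  have cM: "c \<in> M" unfolding c_def using M_closed a b by metis
  have id: "(adj (a+b) o\<^sub>L (a+b)) + (adj c o\<^sub>L c) = (1 + s^2) *\<^sub>R (adj a o\<^sub>L a) + (1 + t^2) *\<^sub>R (adj b o\<^sub>L b)"
  proof (rule blinfun_eqI)
    fix x
    have "((adj (a+b) o\<^sub>L (a+b)) + (adj c o\<^sub>L c)) x =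
       (adj a (a x) + adj a (b x) + adj b (a x) + adj b (b x)) +
       (s *\<^sub>R (s *\<^sub>R adj a (a x) - t *\<^sub>R adj a (b x)) - t *\<^sub>R (s *\<^sub>R adj b (a x) - t *\<^sub>R adj b (b x)))"
      by (simp add: c_def adj_add adj_diff adj_scaleR plus_blinfun.rep_eq minus_blinfun.rep_eq scaleR_blinfun.rep_eq
           blinfun.add_right blinfun.diff_right blinfun.scaleR_right)
    also have "\<dots> = ((1 + s^2) *\<^sub>R (adj a o\<^sub>L a) + (1 + t^2) *\<^sub>R (adj b o\<^sub>L b)) x"
      by (simp add: plus_blinfun.rep_eq scaleR_blinfun.rep_eq vec_id[OF st])
    finally show "((adj (a+b) o\<^sub>L (a+b)) + (adj c o\<^sub>L c)) x = ((1 + s^2) *\<^sub>R (adj a o\<^sub>L a) + (1 + t^2) *\<^sub>R (adj b o\<^sub>L b)) x" .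
  qed
  have pab: "adj (a+b) o\<^sub>L (a+b) \<in> pos_part M" using M_closed(1)[OF a b] by (rule pos_in)
  have pc: "adj c o\<^sub>L c \<in> pos_part M" using cM by (rule pos_in)
  have pa: "adj a o\<^sub>L a \<in> pos_part M" using a by (rule pos_in)
  have pb: "adj b o\<^sub>L b \<in> pos_part M" using b by (rule pos_in)
  have "N (a + b) \<le> N (a+b) + \<tau> (adj c o\<^sub>L c)" by simp
  also have "\<dots> = \<tau> ((adj (a+b) o\<^sub>L (a+b)) + (adj c o\<^sub>L c))" unfolding N_def using tau_add[OF pab pc] by simp
  also have "\<dots> = \<tau> ((1 + s^2) *\<^sub>R (adj a o\<^sub>L a) + (1 + t^2) *\<^sub>R (adj b o\<^sub>L b))" by (simp add: id)
  also have "\<dots> = ennreal (1 + s^2) * N a + ennreal (1 + t^2) * N b"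
    using tau_add[OF pos_scale[OF _ pa] pos_scale[OF _ pb], of "1 + s^2" "1 + t^2"]
      tau_scale[OF pa, of "1+s^2"] tau_scale[OF pb, of "1+t^2"] by (simp add: N_def)
  finally show ?thesis by (simp add: t_def)
qed

lemma norm2_N: "norm2 \<tau> a = sqrt (enn2real (N a))" by (simp add: norm2_def N_def)

lemma tri:
  assumes a: "a \<in> M" and b: "b \<in> M" and fa: "N a < \<infinity>" and fb: "N b < \<infinity>"
  shows "N (a + b) < \<infinity>" "norm2 \<tau> (a + b) \<le> norm2 \<tau> a + norm2 \<tau> b"
proof -
  define A where "A = enn2real (N a)"
  define B where "B = enn2real (N b)"
  have A: "N a = ennreal A" "A \<ge> 0" using fa by (auto simp: A_def)
  have B: "N b = ennreal B" "B \<ge> 0" using fb by (auto simp: B_def)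
  have key: "N (a + b) \<le> ennreal ((1 + s^2) * A + (1 + (1/s)^2) * B)" if "s > 0" for s
  proof -
    have e: "ennreal ((1 + s^2) * A + (1 + (1/s)^2) * B) = ennreal (1 + s^2) * ennreal A + ennreal (1 + (1/s)^2) * ennreal B"
    proof -
      have n1: "0 \<le> (1+s^2)*A" and n2: "0 \<le> (1 + (1/s)^2) * B" using A B by auto
      show ?thesis using A B by (simp add: ennreal_plus[OF n1 n2] ennreal_mult del: ennreal_plus)
    qed
    show ?thesis using N_key[OF a b that] A B unfolding e by simp
  qed
  from key[of 1] have "N (a + b) \<le> ennreal ((1 + 1^2) * A + (1 + (1/1)^2) * B)" by simp
  thus fin: "N (a + b) < \<infinity>" using order.strict_trans1[OF _ ennreal_less_top] by simp
  have keyr: "enn2real (N (a + b)) \<le> (1 + s^2) * A + (1 + (1/s)^2) * B" if "s > 0" for s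
  proof -
    have "enn2real (N (a + b)) \<le> enn2real (ennreal ((1 + s^2) * A + (1 + (1/s)^2) * B))"
      using key[OF that] by (intro enn2real_mono) auto
    also have "\<dots> = (1 + s^2) * A + (1 + (1/s)^2) * B" using A B by (intro enn2real_ennreal) auto
    finally show ?thesis .
  qed
  show "norm2 \<tau> (a + b) \<le> norm2 \<tau> a + norm2 \<tau> b"
  proof (cases "A = 0 \<or> B = 0")
    case True
    thus ?thesis
    proof
      assume "A = 0" hence "a = 0" using A N_zero_iff[OF a] by simp
      thus ?thesis by (simp add: norm2_def)
    next
      assume "B = 0" hence "b = 0" using B N_zero_iff[OF b] by simp
      thus ?thesis by (simp add: norm2_def)
    qed
  next
    case False
    hence Ap: "A > 0" and Bp: "B > 0" using A B by auto
    define s where "s = sqrt (sqrt B / sqrt A)"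
    have sp: "s > 0" using Ap Bp by (simp add: s_def)
    have s2: "s^2 = sqrt B / sqrt A" using Ap Bp by (simp add: s_def)
    have "(1 + s^2) * A + (1 + (1/s)^2) * B = A + sqrt B / sqrt A * A + B + sqrt A / sqrt B * B"
      using s2 sp by (simp add: power_divide algebra_simps)
    also have "sqrt B / sqrt A * A = sqrt A * sqrt B"
    proof -
      have sX: "sqrt A * sqrt A = A" using Ap by simp
      have "sqrt A > 0" using Ap by simp
      hence "sqrt B / sqrt A * (sqrt A * sqrt A) = sqrt A * sqrt B" by (simp add: field_simps)
      thus ?thesis using sX by simp
    qed
    also have "sqrt A / sqrt B * B = sqrt A * sqrt B"
    proof -
      have sX: "sqrt B * sqrt B = B" using Bp by simp
      have "sqrt B > 0" using Bp by simp
      hence "sqrt A / sqrt B * (sqrt B * sqrt B) = sqrt A * sqrt B" by (simp add: field_simps)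
      thus ?thesis using sX by simp
    qed
    also have "A + sqrt A * sqrt B + B + sqrt A * sqrt B = (sqrt A + sqrt B)^2"
      using Ap Bp by (simp add: power2_eq_square algebra_simps)
    finally have "enn2real (N (a + b)) \<le> (sqrt A + sqrt B)^2" using keyr[OF sp] by simp
    hence "sqrt (enn2real (N (a + b))) \<le> sqrt ((sqrt A + sqrt B)^2)" by (rule real_sqrt_le_mono)
    also have "\<dots> = sqrt A + sqrt B" using Ap Bp by (simp add: abs_of_nonneg)
    finally have "sqrt (enn2real (N (a + b))) \<le> sqrt A + sqrt B" .
    thus ?thesis by (simp add: norm2_N A_def B_def)
  qed
qed


definition L2 where "L2 a \<longleftrightarrow> a \<in> M \<and> N a < \<infinity>"

lemma L2_add: "L2 a \<Longrightarrow> L2 b \<Longrightarrow> L2 (a + b)"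
  unfolding L2_def using tri(1) M_closed(1) by blast
lemma L2_minus: "L2 a \<Longrightarrow> L2 (- a)"
  unfolding L2_def using N_minus M_closed(5) by metis
lemma L2_diff: "L2 a \<Longrightarrow> L2 b \<Longrightarrow> L2 (a - b)"
  using L2_add[of a "- b"] L2_minus[of b] by simp

lemma U2_iff: "u \<in> unitary_group_2 M \<tau> \<longleftrightarrow>
   u \<in> M \<and> adj u o\<^sub>L u = id_blinfun \<and> u o\<^sub>L adj u = id_blinfun \<and> L2 (id_blinfun - u)"
  unfolding unitary_group_2_def unitary_group_def L2_part_def L2_def N_def by auto

lemma U2_diff: assumes "u \<in> unitary_group_2 M \<tau>" "v \<in> unitary_group_2 M \<tau>" shows "L2 (u - v)"
proof -
  have "u - v = (id_blinfun - v) - (id_blinfun - u)" by simp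
  thus ?thesis using L2_diff assms U2_iff by metis
qed

lemma norm2_nonneg: "0 \<le> norm2 \<tau> a" by (simp add: norm2_def)

lemma norm2_tri: "L2 a \<Longrightarrow> L2 b \<Longrightarrow> norm2 \<tau> (a + b) \<le> norm2 \<tau> a + norm2 \<tau> b"
  unfolding L2_def using tri(2) by blast

lemma norm2_minus: "norm2 \<tau> (- a) = norm2 \<tau> a" by (simp add: norm2_N N_minus)

lemma main:
  defines "U2 \<equiv> unitary_group_2 M \<tau>"
    and "d \<equiv> (\<lambda>u v. norm2 \<tau> (u - v))"
  shows "Metric_space U2 d \<and>
         id_blinfun \<in> U2 \<and>
         (\<forall>u\<in>U2. \<forall>v\<in>U2. u o\<^sub>L v \<in> U2) \<and>
         (\<forall>u\<in>U2. adj u \<in> U2) \<and>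
         continuous_map (prod_topology (Metric_space.mtopology U2 d) (Metric_space.mtopology U2 d))
           (Metric_space.mtopology U2 d) (\<lambda>(u, v). u o\<^sub>L v) \<and>
         continuous_map (Metric_space.mtopology U2 d) (Metric_space.mtopology U2 d) adj"
proof -
  have MS: "Metric_space U2 d"
  proof
    fix x y show "0 \<le> d x y" by (simp add: d_def norm2_nonneg)
    show "d x y = d y x" unfolding d_def using norm2_minus[of "x - y"] by simp
  next
    fix x y assume xy: "x \<in> U2" "y \<in> U2"
    have L: "L2 (x - y)" using U2_diff xy unfolding U2_def by blast
    show "d x y = 0 \<longleftrightarrow> x = y"
    proof
      assume "d x y = 0"
      hence "enn2real (N (x - y)) = 0" by (simp add: d_def norm2_N)
      hence "N (x - y) = 0" using L unfolding L2_def by (auto simp: enn2real_eq_0_iff)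
      thus "x = y" using N_zero_iff L unfolding L2_def by simp
    next
      assume "x = y" thus "d x y = 0" by (simp add: d_def norm2_N N_def tau_zero)
    qed
  next
    fix x y z assume xyz: "x \<in> U2" "y \<in> U2" "z \<in> U2"
    have "x - z = (x - y) + (y - z)" by simp
    thus "d x z \<le> d x y + d y z" unfolding d_def
      using norm2_tri U2_diff xyz unfolding U2_def by metis
  qed
  have U2m: "u \<in> M" "adj u o\<^sub>L u = id_blinfun" "u o\<^sub>L adj u = id_blinfun" "L2 (id_blinfun - u)"
    if "u \<in> U2" for u using that U2_iff unfolding U2_def by auto
  have idU: "id_blinfun \<in> U2"
  proof -
    have "id_blinfun o\<^sub>L id_blinfun = (id_blinfun :: 'h \<Rightarrow>\<^sub>L 'h)" by (rule blinfun_eqI) simp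
    thus ?thesis unfolding U2_def U2_iff using M_id by (simp add: adj_id L2_def N_def tau_zero M_zero)
  qed
  have mulU: "u o\<^sub>L v \<in> U2" if "u \<in> U2" "v \<in> U2" for u v
  proof -
    note u = U2m[OF that(1)] and v = U2m[OF that(2)]
    have pu: "\<And>a. adj u (u a) = a" "\<And>a. u (adj u a) = a" "\<And>a. adj v (v a) = a" "\<And>a. v (adj v a) = a"
      using u(2,3) v(2,3) by (metis blinfun_apply_blinfun_compose blinfun_apply_id_blinfun)+
    have "adj (u o\<^sub>L v) o\<^sub>L (u o\<^sub>L v) = id_blinfun"
      by (intro blinfun_eqI) (simp add: adj_comp pu)
    moreover have "(u o\<^sub>L v) o\<^sub>L adj (u o\<^sub>L v) = id_blinfun"
      by (intro blinfun_eqI) (simp add: adj_comp pu)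
    moreover have "L2 (id_blinfun - (u o\<^sub>L v))"
    proof -
      have e: "id_blinfun - (u o\<^sub>L v) = (id_blinfun - u) + (u o\<^sub>L (id_blinfun - v))"
        by (rule blinfun_eqI) (simp add: blinfun.bilinear_simps)
      have "L2 (u o\<^sub>L (id_blinfun - v))"
        using v(4) N_left[OF u(2)] M_closed(3)[OF u(1)] unfolding L2_def by simp
      thus ?thesis unfolding e using u(4) L2_add by blast
    qed
    ultimately show ?thesis unfolding U2_def U2_iff using u v M_closed(3) by blast
  qed
  have adjU: "adj u \<in> U2" if "u \<in> U2" for u
  proof -
    note u = U2m[OF that]
    have "id_blinfun - adj u = adj (id_blinfun - u)" by (simp add: adj_diff adj_id)
    hence "L2 (id_blinfun - adj u)" using u(4) N_adj unfolding L2_def by (metis M_closed(6))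
    thus ?thesis unfolding U2_def U2_iff using u M_closed(6) by (simp add: adj_adj)
  qed
  have dmul: "d (u o\<^sub>L v) (u' o\<^sub>L v') \<le> d u u' + d v v'"
    if "u \<in> U2" "v \<in> U2" "u' \<in> U2" "v' \<in> U2" for u v u' v'
  proof -
    have e: "(u o\<^sub>L v) - (u' o\<^sub>L v') = (u o\<^sub>L (v - v')) + ((u - u') o\<^sub>L v')"
      by (rule blinfun_eqI) (simp add: blinfun.bilinear_simps)
    have Lv: "L2 (v - v')" and Lu: "L2 (u - u')" using U2_diff that unfolding U2_def by auto
    have n1: "N (u o\<^sub>L (v - v')) = N (v - v')" using N_left U2m(2)[OF that(1)] by blast
    have n2: "N ((u - u') o\<^sub>L v') = N (u - u')"
      using N_right U2m(3)[OF that(4)] Lu U2m(1)[OF that(4)] unfolding L2_def by blast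
    have L1: "L2 (u o\<^sub>L (v - v'))" using Lv n1 M_closed(3) U2m(1)[OF that(1)] unfolding L2_def by simp
    have L2': "L2 ((u - u') o\<^sub>L v')" using Lu n2 M_closed(3) U2m(1)[OF that(4)] unfolding L2_def by simp
    have "d (u o\<^sub>L v) (u' o\<^sub>L v') \<le> norm2 \<tau> (u o\<^sub>L (v - v')) + norm2 \<tau> ((u - u') o\<^sub>L v')"
      unfolding d_def e using norm2_tri[OF L1 L2'] .
    also have "\<dots> = d u u' + d v v'" by (simp add: d_def norm2_N n1 n2)
    finally show ?thesis .
  qed
  interpret MS: Metric_space U2 d by (rule MS)
  interpret M12: Metric_space12 U2 d U2 d by (simp add: Metric_space12_def MS)
  have cmul: "continuous_map (prod_topology MS.mtopology MS.mtopology) MS.mtopology (\<lambda>(u, v). u o\<^sub>L v)"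
    unfolding M12.mtopology_prod_metric[symmetric]
    unfolding M12.Prod_metric.metric_continuous_map[OF MS]
  proof (intro conjI ballI allI impI)
    show "(\<lambda>(u, v). u o\<^sub>L v) ` (U2 \<times> U2) \<subseteq> U2" using mulU by auto
  next
    fix a :: "('h \<Rightarrow>\<^sub>L 'h) \<times> ('h \<Rightarrow>\<^sub>L 'h)" and e :: real
    assume a: "a \<in> U2 \<times> U2" and e: "e > 0"
    show "\<exists>\<delta>>0. \<forall>x. x \<in> U2 \<times> U2 \<and> prod_dist d d a x < \<delta> \<longrightarrow> d ((\<lambda>(u, v). u o\<^sub>L v) a) ((\<lambda>(u, v). u o\<^sub>L v) x) < e"
    proof (intro exI conjI allI impI)
      show "e / 2 > 0" using e by simp
    next
      fix x assume x: "x \<in> U2 \<times> U2 \<and> prod_dist d d a x < e / 2"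
      obtain u v where uv: "a = (u, v)" by fastforce
      obtain u' v' where uv': "x = (u', v')" by fastforce
      have "d u u' \<le> prod_dist d d a x" "d v v' \<le> prod_dist d d a x"
        using M12.component_le_prod_metric uv uv' by auto
      moreover have "d (u o\<^sub>L v) (u' o\<^sub>L v') \<le> d u u' + d v v'" using dmul a x uv uv' by auto
      ultimately show "d ((\<lambda>(u, v). u o\<^sub>L v) a) ((\<lambda>(u, v). u o\<^sub>L v) x) < e" using x uv uv' by auto
    qed
  qed
  have cadj: "continuous_map MS.mtopology MS.mtopology adj"
    unfolding MS.metric_continuous_map[OF MS]
  proof (intro conjI ballI allI impI)
    show "adj ` U2 \<subseteq> U2" using adjU by auto
  next
    fix a e assume a: "a \<in> U2" and e: "(e::real) > 0"
    show "\<exists>\<delta>>0. \<forall>x. x \<in> U2 \<and> d a x < \<delta> \<longrightarrow> d (adj a) (adj x) < e"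
    proof (intro exI conjI allI impI)
      show "e > 0" by fact
    next
      fix x assume x: "x \<in> U2 \<and> d a x < e"
      have "d (adj a) (adj x) = norm2 \<tau> (adj (a - x))" by (simp add: d_def adj_diff)
      also have "\<dots> = d a x" using U2_diff[of a x] a x unfolding U2_def L2_def d_def
        by (simp add: norm2_N N_adj)
      finally show "d (adj a) (adj x) < e" using x by simp
    qed
  qed
  show ?thesis using MS idU mulU adjU cmul cadj by blast
qed

end

theorem lemma3p3:
  fixes J :: "'h::{real_inner,complete_space} \<Rightarrow>\<^sub>L 'h"
    and M :: "('h \<Rightarrow>\<^sub>L 'h) set"
    and \<tau> :: "('h \<Rightarrow>\<^sub>L 'h) \<Rightarrow> ennreal"
  assumes "von_neumann_algebra J M"
    and "nfs_trace M \<tau>"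
  defines "U2 \<equiv> unitary_group_2 M \<tau>"
    and "d \<equiv> (\<lambda>u v. norm2 \<tau> (u - v))"
  shows "Metric_space U2 d \<and>
         id_blinfun \<in> U2 \<and>
         (\<forall>u\<in>U2. \<forall>v\<in>U2. u o\<^sub>L v \<in> U2) \<and>
         (\<forall>u\<in>U2. adj u \<in> U2) \<and>
         continuous_map (prod_topology (Metric_space.mtopology U2 d) (Metric_space.mtopology U2 d))
           (Metric_space.mtopology U2 d) (\<lambda>(u, v). u o\<^sub>L v) \<and>
         continuous_map (Metric_space.mtopology U2 d) (Metric_space.mtopology U2 d) adj"
  unfolding U2_def d_def by (rule main[OF assms(1,2)])

end
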